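(* Let $\alpha>0$ and $\lambda\in\mathbb C$ with $\operatorname{Re}\lambda>-1$ and $\lambda\notin\{0,1\}$. Then the hypergeometric equation $$z(1-z)\psi''+\big((\lambda-\sqrt{1+\alpha})-2\lambda z\big)\psi'-\lambda(\lambda-1)\psi=0$$ has no nontrivial solution $\psi\in C^\infty[0,1]$ (equivalently, with $y'=2z-1$, the equation $(\lambda^2-\lambda)\psi+(2\lambda y'+2\sqrt{1+\alpha})\psi'+(y'^2-1)\psi''=0$ has no nontrivial solution in $C^\infty[-1,1]$). As a consequence, the equation $$(\lambda^2+\lambda)\varphi+\Big((2\lambda+2)y+\frac{2\alpha}{\sqrt{1+\alpha}+y}\Big)\varphi'+(y^2-1)\varphi''=0$$ has no nontrivial solution $\varphi\in C^\infty[-1,1]$ when $\operatorname{Re}\lambda>-1$ and $\lambda\notin\{0,1\}$. *)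

theory Defs
  imports "HOL-Analysis.Analysis"
begin

text \<open>A function f on the closed interval [a,b] is C-infinity there if it admits a
tower of derivatives: D 0 = f on [a,b] and each D n has derivative D (n+1) at every
point of [a,b], taken within [a,b] (one-sided at the endpoints).\<close>
definition smooth_tower :: "real \<Rightarrow> real \<Rightarrow> (real \<Rightarrow> complex) \<Rightarrow> (nat \<Rightarrow> real \<Rightarrow> complex) \<Rightarrow> bool" where
  "smooth_tower a b f D \<longleftrightarrow>
     (\<forall>x\<in>{a..b}. D 0 x = f x) \<and>
     (\<forall>n. \<forall>x\<in>{a..b}. (D n has_vector_derivative D (Suc n) x) (at x within {a..b}))"

definition smooth_cc :: "real \<Rightarrow> real \<Rightarrow> (real \<Rightarrow> complex) \<Rightarrow> bool" where
  "smooth_cc a b f \<longleftrightarrow> (\<exists>D. smooth_tower a b f D)"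

end

theory Submission
  imports Defs
begin


lemma moments_zero_real:
  fixes r :: "real \<Rightarrow> real"
  assumes cont: "continuous_on {0..1} r"
    and mom: "\<And>p::nat. ((\<lambda>x. r x * x^p) has_integral 0) {0..1}"
  shows "\<forall>x\<in>{0..1}. r x = 0"
proof -
  have poly: "((\<lambda>x. r x * g x) has_integral 0) {0..1}" if "real_polynomial_function g" for g
  proof -
    have "\<exists>a n. g = (\<lambda>x. \<Sum>i\<le>n. a i * x^i)"
      using that by (simp only: real_polynomial_function_iff_sum)
    then obtain a n where g: "g = (\<lambda>x. \<Sum>i\<le>n. a i * x^i)" by (elim exE)
    have "((\<lambda>x. \<Sum>i\<le>n. a i * (r x * x^i)) has_integral (\<Sum>i\<le>n. a i * 0)) {0..1}"
      by (rule has_integral_sum) (simp, rule has_integral_mult_right, rule mom)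
    moreover have "(\<lambda>x. r x * g x) = (\<lambda>x. \<Sum>i\<le>n. a i * (r x * x^i))"
      unfolding g by (rule ext, subst sum_distrib_left, rule sum.cong, simp, simp only: mult.left_commute)
    ultimately show ?thesis by simp
  qed
  obtain B where B: "\<And>x. x \<in> {0..1} \<Longrightarrow> \<bar>r x\<bar> \<le> B"
    using compact_imp_bounded[OF compact_continuous_image[OF cont compact_Icc]]
    unfolding bounded_iff by fastforce
  define B' where "B' = max B 1"
  have B': "\<And>x. x \<in> {0..1} \<Longrightarrow> \<bar>r x\<bar> \<le> B'" "B' > 0" using B by (force simp: B'_def)+
  have sqint: "(\<lambda>x. r x * r x) integrable_on {0..1}"
    by (intro integrable_continuous_interval continuous_intros cont)
  have le: "integral {0..1} (\<lambda>x. r x * r x) \<le> B' * e" if e: "e > 0" for e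
  proof -
    obtain g where g: "real_polynomial_function g" "\<And>x. x \<in> {0..1} \<Longrightarrow> \<bar>r x - g x\<bar> < e"
      using Stone_Weierstrass_real_polynomial_function[OF compact_Icc cont e] by blast
    have i1: "((\<lambda>x. r x * r x) has_integral integral {0..1} (\<lambda>x. r x * r x)) {0..1}"
      using sqint by blast
    have "((\<lambda>x. r x * r x - r x * g x) has_integral (integral {0..1} (\<lambda>x. r x * r x) - 0)) {0..1}"
      by (intro has_integral_diff i1 poly g)
    then have i2: "((\<lambda>x. r x * (r x - g x)) has_integral (integral {0..1} (\<lambda>x. r x * r x))) {0..1}"
      by (simp add: algebra_simps)
    have bnd: "\<And>x. x \<in> cbox 0 (1::real) \<Longrightarrow> norm (r x * (r x - g x)) \<le> B' * e"
    proof -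
      fix x :: real assume "x \<in> cbox 0 1"
      then have x: "x \<in> {0..1}" by simp
      have "norm (r x * (r x - g x)) = \<bar>r x\<bar> * \<bar>r x - g x\<bar>" by (simp add: abs_mult)
      also have "\<dots> \<le> B' * e"
        using B'(1)[OF x] g(2)[OF x] by (intro mult_mono) auto
      finally show "norm (r x * (r x - g x)) \<le> B' * e" .
    qed
    have i3: "((\<lambda>x. r x * (r x - g x)) has_integral (integral {0..1} (\<lambda>x. r x * r x))) (cbox 0 (1::real))"
      using i2 by simp
    have "0 \<le> B' * e" using B' e by simp
    from has_integral_bound[OF this i3 bnd]
    have "norm (integral {0..1} (\<lambda>x. r x * r x)) \<le> B' * e" by simp
    then show ?thesis by simp
  qed
  have "integral {0..1} (\<lambda>x. r x * r x) \<le> 0"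
  proof (rule ccontr)
    assume "\<not> ?thesis"
    then have pos: "integral {0..1} (\<lambda>x. r x * r x) > 0" by simp
    have "integral {0..1} (\<lambda>x. r x * r x) \<le> B' * (integral {0..1} (\<lambda>x. r x * r x) / (2*B'))"
      using le[of "integral {0..1} (\<lambda>x. r x * r x) / (2*B')"] pos B'(2) by simp
    also have "\<dots> = integral {0..1} (\<lambda>x. r x * r x) / 2" using B'(2) by simp
    finally show False using pos by simp
  qed
  moreover have "integral {0..1} (\<lambda>x. r x * r x) \<ge> 0"
    by (intro integral_nonneg sqint) auto
  ultimately have z0: "integral {0..1} (\<lambda>x. r x * r x) = 0" by (rule antisym)
  have z: "((\<lambda>x. r x * r x) has_integral 0) (cbox 0 1)"
    using integrable_integral[OF sqint] unfolding z0 by simp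
  show ?thesis
  proof
    fix x :: real assume x: "x \<in> {0..1}"
    have "r x * r x = 0"
      by (rule has_integral_0_cbox_imp_0[OF _ _ z, of x]) (use x in \<open>auto intro!: continuous_intros cont simp: box_real\<close>)
    then show "r x = 0" by simp
  qed
qed




lemma moments_zero_complex:
  fixes h :: "real \<Rightarrow> complex"
  assumes cont: "continuous_on {0..1} h"
    and mom: "\<And>p::nat. ((\<lambda>x. h x * of_real (x^p)) has_integral 0) {0..1}"
  shows "\<forall>x\<in>{0..1}. h x = 0"
proof -
  have r: "\<forall>x\<in>{0..1}. Re (h x) = 0"
  proof (rule moments_zero_real)
    show "continuous_on {0..1} (\<lambda>x. Re (h x))"
      by (intro continuous_intros cont)
    fix p :: nat
    have "((Re \<circ> (\<lambda>x. h x * of_real (x^p))) has_integral Re 0) {0..1}"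
      by (rule has_integral_linear[OF mom bounded_linear_Re])
    then show "((\<lambda>x. Re (h x) * x^p) has_integral 0) {0..1}"
      by (simp add: o_def)
  qed
  have i: "\<forall>x\<in>{0..1}. Im (h x) = 0"
  proof (rule moments_zero_real)
    show "continuous_on {0..1} (\<lambda>x. Im (h x))"
      by (intro continuous_intros cont)
    fix p :: nat
    have "((Im \<circ> (\<lambda>x. h x * of_real (x^p))) has_integral Im 0) {0..1}"
      by (rule has_integral_linear[OF mom bounded_linear_Im])
    then show "((\<lambda>x. Im (h x) * x^p) has_integral 0) {0..1}"
      by (simp add: o_def)
  qed
  show ?thesis using r i by (simp add: complex_eq_iff)
qed

lemma Lg_deriv:
  fixes c d e X Y xr u u1 u2 g g1 g2 :: complex
  assumes eq: "xr * (1 - xr) * u2 + (c - (c+d) * xr) * u1 - e * u = 0"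
  shows "(X * Y * (c * (1 - xr) - d * xr)) * (g * u1 - g1 * u) + (X * xr * (Y * (1 - xr))) * (g1 * u1 + g * u2 - (g2 * u + g1 * u1))
     = - (X * Y) * u * (xr * (1 - xr) * g2 + (c - (c+d) * xr) * g1 - e * g)"
proof -
  have "xr * (1 - xr) * u2 = e * u - (c - (c+d) * xr) * u1" using eq by (simp add: algebra_simps)
  then have "X * Y * g * (xr * (1 - xr) * u2) = X * Y * g * (e * u - (c - (c+d) * xr) * u1)" by simp
  then show ?thesis by (simp add: algebra_simps)
qed




lemma powr_real_deriv:
  fixes w :: complex and x :: real
  assumes "x > 0"
  shows "((\<lambda>t. of_real t powr w) has_vector_derivative (w * of_real x powr (w - 1))) (at x within S)"
proof -
  have "of_real x \<notin> \<real>\<^sub>\<le>\<^sub>0" using assms by (auto simp: complex_nonpos_Reals_iff)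
  from has_field_derivative_powr[OF this, of w] show ?thesis
    by (rule has_vector_derivative_real_field)
qed

lemma powr_real_deriv2:
  fixes w :: complex and x :: real
  assumes "x < 1"
  shows "((\<lambda>t. of_real (1 - t) powr w) has_vector_derivative (- (w * of_real (1 - x) powr (w - 1)))) (at x within S)"
proof -
  have "of_real (1 - x) \<notin> \<real>\<^sub>\<le>\<^sub>0" using assms by (simp only: nonpos_Reals_of_real_iff)
  then have nz: "1 - complex_of_real x \<notin> \<real>\<^sub>\<le>\<^sub>0" by simp
  have d1: "((\<lambda>z. z powr w) has_field_derivative (w * (1 - of_real x) powr (w - 1))) (at ((\<lambda>z. 1 - z) (of_real x)))"
    using has_field_derivative_powr[OF nz] by simp
  have d2: "((\<lambda>z::complex. 1 - z) has_field_derivative -1) (at (of_real x))"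
    by (auto intro!: derivative_eq_intros)
  have "((\<lambda>z. (1 - z) powr w) has_field_derivative (w * (1 - of_real x) powr (w - 1)) * (-1)) (at (of_real x))"
    using DERIV_chain2[OF d1 d2] by simp
  from has_vector_derivative_real_field[OF this, where s=S] show ?thesis by simp
qed

lemma hyp_ftc:
  fixes c d e :: complex and u u1 u2 :: "real \<Rightarrow> complex" and g g1 g2 :: "real \<Rightarrow> real"
  assumes Rc: "Re c > 1" and Rd: "Re d > 1"
    and du: "\<And>x. x \<in> {0..1} \<Longrightarrow> (u has_vector_derivative u1 x) (at x within {0..1})"
    and du1: "\<And>x. x \<in> {0..1} \<Longrightarrow> (u1 has_vector_derivative u2 x) (at x within {0..1})"
    and eq: "\<And>x. x \<in> {0..1} \<Longrightarrow> of_real (x*(1-x)) * u2 x + (c - (c+d) * of_real x) * u1 x - e * u x = 0"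
    and dg: "\<And>x. (g has_real_derivative g1 x) (at x)"
    and dg1: "\<And>x. (g1 has_real_derivative g2 x) (at x)"
  shows "((\<lambda>x. (of_real x powr (c-1) * of_real (1-x) powr (d-1) * u x) *
      (of_real (x*(1-x)*g2 x) + (c - (c+d) * of_real x) * of_real (g1 x) - e * of_real (g x))) has_integral 0) {0..1}"
proof -
  define F where "F x = of_real x powr c * of_real (1-x) powr d * (of_real (g x) * u1 x - of_real (g1 x) * u x)" for x
  define F' where "F' x = - ((of_real x powr (c-1) * of_real (1-x) powr (d-1) * u x) *
      (of_real (x*(1-x)*g2 x) + (c - (c+d) * of_real x) * of_real (g1 x) - e * of_real (g x)))" for x
  have cu: "continuous_on {0..1} u"
    unfolding continuous_on_eq_continuous_within using has_vector_derivative_continuous[OF du] by blast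
  have cu1: "continuous_on {0..1} u1"
    unfolding continuous_on_eq_continuous_within using has_vector_derivative_continuous[OF du1] by blast
  have cg: "continuous_on {0..1} g" "continuous_on {0..1} g1"
    using dg dg1 by (auto intro!: DERIV_isCont continuous_at_imp_continuous_on)
  have cP: "continuous_on {0..1} (\<lambda>x. of_real x powr c)"
    by (intro continuous_on_powr_complex continuous_intros) (use Rc in auto)
  have cQ: "continuous_on {0..1} (\<lambda>x. of_real (1-x) powr d)"
    by (intro continuous_on_powr_complex continuous_intros) (use Rd in auto)
  have cF: "continuous_on {0..1} F"
    unfolding F_def by (intro continuous_intros cP cQ cu cu1 cg)
  have "(F' has_integral (F 1 - F 0)) {0..1}"
  proof (rule fundamental_theorem_of_calculus_interior[OF _ cF])
    fix x :: real assume x: "x \<in> {0<..<1}"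
    then have x01: "x \<in> {0..1}" and xi: "x \<in> interior {0..1}" by auto
    have du': "(u has_vector_derivative u1 x) (at x)"
      using du[OF x01] by (simp add: at_within_interior[OF xi])
    have du1': "(u1 has_vector_derivative u2 x) (at x)"
      using du1[OF x01] by (simp add: at_within_interior[OF xi])
    have dg': "((\<lambda>x. of_real (g x)) has_vector_derivative of_real (g1 x)) (at x)"
      by (rule has_vector_derivative_of_real[OF dg])
    have dg1': "((\<lambda>x. of_real (g1 x)) has_vector_derivative of_real (g2 x)) (at x)"
      by (rule has_vector_derivative_of_real[OF dg1])
    have dPQ: "((\<lambda>t. of_real t powr c * of_real (1-t) powr d) has_vector_derivative
       (of_real x powr c * (- (d * of_real (1 - x) powr (d - 1))) + c * of_real x powr (c - 1) * of_real (1-x) powr d)) (at x)"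
      by (rule has_vector_derivative_mult[OF powr_real_deriv powr_real_deriv2]) (use x in auto)
    have dG: "((\<lambda>t. of_real (g t) * u1 t - of_real (g1 t) * u t) has_vector_derivative
       ((of_real (g x) * u2 x + of_real (g1 x) * u1 x) - (of_real (g1 x) * u1 x + of_real (g2 x) * u x))) (at x)"
      by (intro has_vector_derivative_diff has_vector_derivative_mult dg' dg1' du' du1')
    have dF: "(F has_vector_derivative
       (of_real x powr c * of_real (1-x) powr d * ((of_real (g x) * u2 x + of_real (g1 x) * u1 x) - (of_real (g1 x) * u1 x + of_real (g2 x) * u x))
        + (of_real x powr c * (- (d * of_real (1 - x) powr (d - 1))) + c * of_real x powr (c - 1) * of_real (1-x) powr d)
          * (of_real (g x) * u1 x - of_real (g1 x) * u x))) (at x)"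
      unfolding F_def by (rule has_vector_derivative_mult[OF dPQ dG])
    define X where "X = of_real x powr (c-1)"
    define Y where "Y = of_real (1-x) powr (d-1)"
    have pX: "of_real x powr c = X * of_real x"
    proof -
      have "(of_real x :: complex) powr c = of_real x powr ((c-1) + 1)" by simp
      also have "\<dots> = X * of_real x" by (simp only: powr_add powr_to_1 X_def)
      finally show ?thesis .
    qed
    have pY: "of_real (1-x) powr d = Y * (1 - of_real x)"
    proof -
      have "(of_real (1-x) :: complex) powr d = of_real (1-x) powr ((d-1) + 1)" by simp
      also have "\<dots> = Y * of_real (1-x)" by (simp only: powr_add powr_to_1 Y_def)
      finally show ?thesis by simp
    qed
    have e0: "of_real x * (1 - of_real x) * u2 x + (c - (c+d) * of_real x) * u1 x - e * u x = 0"
      using eq[OF x01] by simp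
    note L = Lg_deriv[OF e0, of X Y "of_real (g x)" "of_real (g1 x)" "of_real (g2 x)"]
    have "F' x = (of_real x powr c * of_real (1-x) powr d * ((of_real (g x) * u2 x + of_real (g1 x) * u1 x) - (of_real (g1 x) * u1 x + of_real (g2 x) * u x))
        + (of_real x powr c * (- (d * of_real (1 - x) powr (d - 1))) + c * of_real x powr (c - 1) * of_real (1-x) powr d)
          * (of_real (g x) * u1 x - of_real (g1 x) * u x))"
      unfolding F'_def pX pY X_def[symmetric] Y_def[symmetric] using L[symmetric]
      by (simp add: algebra_simps)
    with dF show "(F has_vector_derivative F' x) (at x)" by simp
  qed simp
  moreover have "F 1 = 0" "F 0 = 0" unfolding F_def using Rc Rd by auto
  ultimately have "(F' has_integral 0) {0..1}" by simp
  from has_integral_neg[OF this] show ?thesis by (simp add: F'_def)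
qed




lemma Lpow:
  fixes c d e :: complex and p :: nat and x :: real
  shows "of_real (x*(1-x)*(real p * (real (p - Suc 0) * x ^ (p - Suc 0 - Suc 0)))) + (c - (c+d) * of_real x) * of_real (real p * x ^ (p - Suc 0)) - e * of_real (x^p)
    = of_nat p * (of_nat p + c - 1) * of_real (x^(p - 1)) - (of_nat p ^ 2 + of_nat p * (c + d - 1) + e) * of_real (x^p)"
proof (cases p)
  case 0 then show ?thesis by simp
next
  case (Suc q)
  show ?thesis
  proof (cases q)
    case 0 then show ?thesis using Suc by (simp add: algebra_simps power2_eq_square)
  next
    case (Suc r)
    have "of_real (x*(1-x)*(real p * (real (p - Suc 0) * x ^ (p - Suc 0 - Suc 0)))) = (of_nat p * of_nat q * (1 - of_real x) * of_real x ^ q :: complex)"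
      using \<open>p = Suc q\<close> Suc by (simp add: algebra_simps)
    moreover have "of_real (real p * x ^ (p - Suc 0)) = (of_nat p * of_real x ^ q :: complex)" using \<open>p = Suc q\<close> by simp
    moreover have "of_real (x^p) = (of_real x * of_real x ^ q :: complex)" using \<open>p = Suc q\<close> by simp
    moreover have "of_real (x^(p-1)) = (of_real x ^ q :: complex)" using \<open>p = Suc q\<close> by simp
    moreover have "(of_nat p :: complex) = of_nat q + 1" using \<open>p = Suc q\<close> by simp
    ultimately show ?thesis by (simp add: algebra_simps power2_eq_square)
  qed
qed

lemma hyp_zero:
  fixes c d e :: complex and u u1 u2 :: "real \<Rightarrow> complex"
  assumes Rc: "Re c > 1" and Rd: "Re d > 1"
    and du: "\<And>x. x \<in> {0..1} \<Longrightarrow> (u has_vector_derivative u1 x) (at x within {0..1})"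
    and du1: "\<And>x. x \<in> {0..1} \<Longrightarrow> (u1 has_vector_derivative u2 x) (at x within {0..1})"
    and eq: "\<And>x. x \<in> {0..1} \<Longrightarrow> of_real (x*(1-x)) * u2 x + (c - (c+d) * of_real x) * u1 x - e * u x = 0"
    and nz: "\<And>p::nat. of_nat p ^ 2 + of_nat p * (c + d - 1) + e \<noteq> 0"
  shows "\<forall>x\<in>{0..1}. u x = 0"
proof -
  define h where "h x = of_real x powr (c-1) * of_real (1-x) powr (d-1) * u x" for x
  define A where "A p = (of_nat p ^ 2 + of_nat p * (c + d - 1) + e :: complex)" for p :: nat
  define Bc where "Bc p = (of_nat p * (of_nat p + c - 1) :: complex)" for p :: nat
  have cu: "continuous_on {0..1} u"
    unfolding continuous_on_eq_continuous_within using has_vector_derivative_continuous[OF du] by blast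
  have ch: "continuous_on {0..1} h"
    unfolding h_def
    by (intro continuous_intros continuous_on_powr_complex cu) (use Rc Rd in auto)
  define m where "m p = integral {0..1} (\<lambda>x. h x * of_real (x^p))" for p :: nat
  have hint: "((\<lambda>x. h x * of_real (x^p)) has_integral m p) {0..1}" for p
    unfolding m_def by (intro integrable_integral integrable_continuous_interval continuous_intros ch)
  have rec: "Bc p * m (p - 1) - A p * m p = 0" for p
  proof -
    have dg: "\<And>x. ((\<lambda>x. x^p) has_real_derivative (real p * x ^ (p - Suc 0))) (at x)"
      by (rule DERIV_pow)
    have dg1: "\<And>x. ((\<lambda>x. real p * x ^ (p - Suc 0)) has_real_derivative (real p * (real (p - Suc 0) * x ^ (p - Suc 0 - Suc 0)))) (at x)"
      by (intro DERIV_cmult DERIV_pow)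
    have I1: "((\<lambda>x. h x * (of_real (x*(1-x)*(real p * (real (p - Suc 0) * x ^ (p - Suc 0 - Suc 0)))) + (c - (c+d) * of_real x) * of_real (real p * x ^ (p - Suc 0)) - e * of_real (x^p))) has_integral 0) {0..1}"
      unfolding h_def by (rule hyp_ftc[OF Rc Rd du du1 eq dg dg1])
    have I2: "((\<lambda>x. Bc p * (h x * of_real (x^(p-1))) - A p * (h x * of_real (x^p))) has_integral (Bc p * m (p - 1) - A p * m p)) {0..1}"
      by (intro has_integral_diff has_integral_mult_right hint)
    have "(\<lambda>x. h x * (of_real (x*(1-x)*(real p * (real (p - Suc 0) * x ^ (p - Suc 0 - Suc 0)))) + (c - (c+d) * of_real x) * of_real (real p * x ^ (p - Suc 0)) - e * of_real (x^p)))
        = (\<lambda>x. Bc p * (h x * of_real (x^(p-1))) - A p * (h x * of_real (x^p)))"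
      by (rule ext, subst Lpow) (simp add: A_def Bc_def algebra_simps)
    with I1 have "((\<lambda>x. Bc p * (h x * of_real (x^(p-1))) - A p * (h x * of_real (x^p))) has_integral 0) {0..1}"
      by simp
    from has_integral_unique[OF this I2] show ?thesis by simp
  qed
  have m0: "m p = 0" for p
  proof (induction p)
    case 0 then show ?case using rec[of 0] nz[of 0] by (simp add: A_def Bc_def)
  next
    case (Suc q) then show ?case using rec[of "Suc q"] nz[of "Suc q"] by (simp add: A_def)
  qed
  have hz: "\<forall>x\<in>{0..1}. h x = 0"
    by (rule moments_zero_complex[OF ch]) (use hint m0 in simp)
  have "u x = 0" if x: "x \<in> {0<..<1}" for x
  proof -
    have "of_real x powr (c-1) \<noteq> (0::complex)" "of_real (1-x) powr (d-1) \<noteq> (0::complex)"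
      using x by (auto simp: powr_def)
    moreover have "x \<in> {0..1}" using x by simp
    then have "h x = 0" using hz by blast
    ultimately show ?thesis unfolding h_def by (simp only: mult_eq_0_iff) blast
  qed
  then have z: "\<And>x. x \<in> {0<..<1} \<Longrightarrow> u x = 0" .
  have cl: "closure {0<..<1::real} = {0..1}" by simp
  have cc: "continuous_on (closure {0<..<1::real}) u" unfolding cl by (rule cu)
  show ?thesis
  proof
    fix x :: real assume "x \<in> {0..1}"
    then have "x \<in> closure {0<..<1::real}" unfolding cl .
    from continuous_constant_on_closure[OF cc z this] show "u x = 0" .
  qed
qed




lemma nz_shift:
  fixes l :: complex
  assumes Rl: "Re l > -1" and l0: "l \<noteq> 0" and l1: "l \<noteq> 1"
  shows "l + of_nat k \<noteq> 0" "l + of_nat k - 1 \<noteq> 0"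
proof -
  show "l + of_nat k \<noteq> 0"
  proof
    assume h: "l + of_nat k = 0"
    then have "l = - of_nat k" by (simp add: add_eq_0_iff)
    then have "Re l = - real k" by simp
    with Rl have "k = 0" by simp
    with h l0 show False by simp
  qed
  show "l + of_nat k - 1 \<noteq> 0"
  proof
    assume h: "l + of_nat k - 1 = 0"
    then have "l = 1 - of_nat k" by (simp add: algebra_simps)
    then have "Re l = 1 - real k" by simp
    with Rl have "k = 0 \<or> k = 1" by linarith
    with h l0 l1 show False by (auto simp: algebra_simps)
  qed
qed

lemma deriv_zero_on:
  fixes E :: "real \<Rightarrow> complex"
  assumes z: "x \<in> {0..1}" and dE: "(E has_vector_derivative E') (at x within {0..1})"
    and zero: "\<And>y. y \<in> {0..1} \<Longrightarrow> E y = 0"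
  shows "E' = 0"
proof -
  have "((\<lambda>y. 0::complex) has_vector_derivative 0) (at x within {0..1})" by simp
  then have "(E has_vector_derivative 0) (at x within {0..1})"
    by (rule has_vector_derivative_transform_within[where d=1]) (use z zero in auto)
  from vector_derivative_unique_within_closed_interval[of 0 1 x E E' 0] dE this z
  show ?thesis by simp
qed

lemma eqk:
  fixes l :: complex and s :: real and D :: "nat \<Rightarrow> real \<Rightarrow> complex"
  assumes tow: "\<And>n x. x \<in> {0..1} \<Longrightarrow> (D n has_vector_derivative D (Suc n) x) (at x within {0..1})"
    and eq: "\<forall>z\<in>{0..1}. of_real (z * (1 - z)) * D 2 z + ((l - of_real s) - 2 * l * of_real z) * D 1 z - l * (l - 1) * D 0 z = 0"
  shows "\<forall>z\<in>{0..1}. of_real (z*(1-z)) * D (k+2) z + ((l - of_real s + of_nat k) - (2*l + 2* of_nat k) * of_real z) * D (k+1) z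
            - (l + of_nat k) * (l + of_nat k - 1) * D k z = 0"
proof (induction k)
  case 0 then show ?case using eq by (simp add: numeral_2_eq_2)
next
  case (Suc k)
  show ?case
  proof
    fix z :: real assume z: "z \<in> {0..1}"
    define C where "C = l - of_real s + of_nat k"
    define B where "B = 2*l + 2* of_nat k"
    define P where "P = (l + of_nat k) * (l + of_nat k - 1)"
    let ?E = "\<lambda>z. of_real (z*(1-z)) * D (k+2) z + (C - B * of_real z) * D (k+1) z - P * D k z"
    have d1: "((\<lambda>z. of_real (z*(1-z)) :: complex) has_vector_derivative of_real (1 - 2*z)) (at z within {0..1})"
      by (rule has_vector_derivative_of_real) (auto intro!: derivative_eq_intros)
    have d2: "((\<lambda>z. C - B * of_real z) has_vector_derivative (- B)) (at z within {0..1})"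
    proof -
      have "((\<lambda>z. of_real z :: complex) has_vector_derivative of_real 1) (at z within {0..1})"
        by (rule has_vector_derivative_of_real) (auto intro!: derivative_eq_intros)
      then have "((\<lambda>z. B * of_real z) has_vector_derivative B * 1) (at z within {0..1})"
        by (intro has_vector_derivative_mult_right) simp
      then have "((\<lambda>z. C - B * of_real z) has_vector_derivative 0 - B * 1) (at z within {0..1})"
        by (intro has_vector_derivative_diff) auto
      then show ?thesis by simp
    qed
    have dE: "(?E has_vector_derivative
        ((of_real (z*(1-z)) * D (k+3) z + of_real (1 - 2*z) * D (k+2) z)
        + ((C - B * of_real z) * D (k+2) z + (- B) * D (k+1) z) - P * D (k+1) z)) (at z within {0..1})"
      by (intro has_vector_derivative_diff has_vector_derivative_add has_vector_derivative_mult
            has_vector_derivative_mult_right d1 d2) (use tow[OF z] in \<open>simp_all add: numeral_3_eq_3 numeral_2_eq_2\<close>)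
    have "((of_real (z*(1-z)) * D (k+3) z + of_real (1 - 2*z) * D (k+2) z)
        + ((C - B * of_real z) * D (k+2) z + (- B) * D (k+1) z) - P * D (k+1) z) = 0"
      by (rule deriv_zero_on[OF z dE]) (use Suc.IH in \<open>simp add: C_def B_def P_def\<close>)
    moreover have "((of_real (z*(1-z)) * D (k+3) z + of_real (1 - 2*z) * D (k+2) z)
        + ((C - B * of_real z) * D (k+2) z + (- B) * D (k+1) z) - P * D (k+1) z)
       = of_real (z*(1-z)) * D (Suc k+2) z + ((l - of_real s + of_nat (Suc k)) - (2*l + 2* of_nat (Suc k)) * of_real z) * D (Suc k+1) z
            - (l + of_nat (Suc k)) * (l + of_nat (Suc k) - 1) * D (Suc k) z"
      by (simp add: C_def B_def P_def algebra_simps numeral_3_eq_3 numeral_2_eq_2)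
    ultimately show "of_real (z*(1-z)) * D (Suc k+2) z + ((l - of_real s + of_nat (Suc k)) - (2*l + 2* of_nat (Suc k)) * of_real z) * D (Suc k+1) z
            - (l + of_nat (Suc k)) * (l + of_nat (Suc k) - 1) * D (Suc k) z = 0" by simp
  qed
qed




lemma part1:
  fixes l :: complex and s :: real and D :: "nat \<Rightarrow> real \<Rightarrow> complex"
  assumes s1: "s > 1" and Rl: "Re l > -1" and l0: "l \<noteq> 0" and l1: "l \<noteq> 1"
    and tow: "smooth_tower 0 1 \<psi> D"
    and eq: "\<forall>z\<in>{0..1}. of_real (z * (1 - z)) * D 2 z + ((l - of_real s) - 2 * l * of_real z) * D 1 z - l * (l - 1) * D 0 z = 0"
  shows "\<forall>z\<in>{0..1}. \<psi> z = 0"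
proof -
  have td: "\<And>n x. x \<in> {0..1} \<Longrightarrow> (D n has_vector_derivative D (Suc n) x) (at x within {0..1})"
    using tow unfolding smooth_tower_def by blast
  have D0: "\<And>x. x \<in> {0..1} \<Longrightarrow> D 0 x = \<psi> x" using tow unfolding smooth_tower_def by blast
  note EK = eqk[OF td eq]
  note NZ = nz_shift[OF Rl l0 l1]
  define N where "N = nat \<lceil>s\<rceil> + 2"
  have big: "D k x = 0" if k: "k \<ge> N" and x: "x \<in> {0..1}" for k x
  proof -
    define c where "c = l - of_real s + of_nat k"
    define d where "d = l + of_real s + of_nat k"
    have kN: "real k \<ge> s + 2" using k unfolding N_def by linarith
    have Rc: "Re c > 1" unfolding c_def using Rl kN by simp
    have Rd: "Re d > 1" unfolding d_def using Rl kN s1 by simp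
    have cd: "c + d = 2 * l + 2 * of_nat k" unfolding c_def d_def by simp
    have eq': "\<And>x. x \<in> {0..1} \<Longrightarrow> of_real (x*(1-x)) * D (Suc (Suc k)) x + (c - (c+d) * of_real x) * D (Suc k) x
         - ((l + of_nat k) * (l + of_nat k - 1)) * D k x = 0"
    proof -
      fix x :: real assume x: "x \<in> {0..1}"
      have cc: "c - (c+d) * of_real x = (l - of_real s + of_nat k) - (2*l + 2 * of_nat k) * of_real x"
        by (simp only: cd) (simp add: c_def)
      show "of_real (x*(1-x)) * D (Suc (Suc k)) x + (c - (c+d) * of_real x) * D (Suc k) x
         - ((l + of_nat k) * (l + of_nat k - 1)) * D k x = 0"
        unfolding cc using EK[of k] x by (simp add: numeral_2_eq_2)
    qed
    have nz: "of_nat p ^ 2 + of_nat p * (c + d - 1) + (l + of_nat k) * (l + of_nat k - 1) \<noteq> 0" for p :: nat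
    proof -
      have "of_nat p ^ 2 + of_nat p * (c + d - 1) + (l + of_nat k) * (l + of_nat k - 1)
          = (l + of_nat (p + k)) * (l + of_nat (p + k) - 1)"
        unfolding cd by (simp add: algebra_simps power2_eq_square)
      then show ?thesis using NZ[of "p+k"] by simp
    qed
    show ?thesis
      using hyp_zero[OF Rc Rd td td eq' nz] x by blast
  qed
  have step: "D k x = 0" if "\<forall>x\<in>{0..1}. D (Suc k) x = 0" "\<forall>x\<in>{0..1}. D (Suc (Suc k)) x = 0" "x \<in> {0..1}" for k x
  proof -
    have "(l + of_nat k) * (l + of_nat k - 1) * D k x = 0"
    proof -
      have a: "D (k+1) x = 0" "D (k+2) x = 0" using that by (auto simp: numeral_2_eq_2)
      have "of_real (x*(1-x)) * D (k+2) x + ((l - of_real s + of_nat k) - (2*l + 2 * of_nat k) * of_real x) * D (k+1) x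
            - (l + of_nat k) * (l + of_nat k - 1) * D k x = 0" using EK[of k] that(3) by blast
      then show ?thesis unfolding a by simp
    qed
    then show ?thesis using NZ[of k] by simp
  qed
  have down: "\<forall>x\<in>{0..1}. D (N - j) x = 0 \<and> D (Suc (N - j)) x = 0" if "j \<le> N" for j
    using that
  proof (induction j)
    case 0 then show ?case using big by simp
  next
    case (Suc j)
    then have IH: "\<forall>x\<in>{0..1}. D (N - j) x = 0 \<and> D (Suc (N - j)) x = 0" by simp
    have e: "Suc (N - Suc j) = N - j" using Suc.prems by simp
    show ?case using IH step[of "N - Suc j"] unfolding e by simp
  qed
  show ?thesis using down[of N] D0 by simp
qed




lemma transf_poly:
  fixes l P D0 D1 D2 S T U X :: complex
  assumes TU: "T * U = 1" and X: "2 * X = S + 1 - T"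
  shows "(X * (1 - X)) * (2*l*(2*(l+1)*(P*U^2)*D0 + (P*U)*(2*(S^2-1)*U^2)*D1)
           + (2*l*(P*U)*(2*(S^2-1)*U^2)*D1 + P*((8*(S^2-1)*U^3)*D1 + (2*(S^2-1)*U^2)^2*D2)))
       + ((l - S) - 2*l*X) * (2*l*(P*U)*D0 + P*(2*(S^2-1)*U^2)*D1)
       - l*(l-1)*(P*D0)
     = - ((S^2-1)*U^2) * P * ((l^2+l)*D0 + ((2*l+2)*((S^2-1)*U - S) + 2*T)*D1
          + (((S^2-1)*U - S)^2 - 1)*D2)"
  using TU X by algebra

lemma transf_identity:
  fixes l P D0 D1 D2 S T :: complex
  assumes T: "T \<noteq> 0" and A: "S^2 - 1 \<noteq> 0"
  shows "((S+1-T)/2 * (1 - (S+1-T)/2)) * (2*l*(2*(l+1)*(P/T^2)*D0 + (P/T)*(2*(S^2-1)/T^2)*D1)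
           + (2*l*(P/T)*(2*(S^2-1)/T^2)*D1 + P*((8*(S^2-1)/T^3)*D1 + (2*(S^2-1)/T^2)^2*D2)))
       + ((l - S) - 2*l*((S+1-T)/2)) * (2*l*(P/T)*D0 + P*(2*(S^2-1)/T^2)*D1)
       - l*(l-1)*(P*D0)
     = - ((S^2-1)/T^2) * P * ((l^2+l)*D0 + ((2*l+2)*((S^2-1)/T - S) + 2*(S^2-1)/(S + ((S^2-1)/T - S)))*D1
          + (((S^2-1)/T - S)^2 - 1)*D2)"
proof -
  define U where "U = 1/T"
  have TU: "T * U = 1" using T by (simp add: U_def)
  have e: "2*(S^2-1)/(S + ((S^2-1)/T - S)) = 2*T"
  proof -
    have "2*(S^2-1)/(S + ((S^2-1)/T - S)) = 2*(S^2-1)/((S^2-1)/T)" by simp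
    also have "\<dots> = 2*T"
    proof -
      have g: "\<And>a::complex. a \<noteq> 0 \<Longrightarrow> 2*a/(a/T) = 2*T" using T by (simp add: field_simps)
      show ?thesis by (rule g[OF A])
    qed
    finally show ?thesis .
  qed
  have d1: "P/T = P*U" "P/T^2 = P*U^2" "(S^2-1)/T^2 = (S^2-1)*U^2" "(S^2-1)/T^3 = (S^2-1)*U^3"
      "(S^2-1)/T = (S^2-1)*U"
    by (simp_all add: U_def divide_inverse power_inverse)
  have d2: "2*(S^2-1)/T^2 = 2*(S^2-1)*U^2" "8*(S^2-1)/T^3 = 8*(S^2-1)*U^3"
    by (simp_all add: U_def divide_inverse power_inverse)
  have X: "2 * ((S+1-T)/2) = S + 1 - T" by simp
  show ?thesis unfolding e unfolding d2 d1 by (rule transf_poly[OF TU X])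
qed




fun Cn :: "nat \<Rightarrow> real \<Rightarrow> real \<Rightarrow> (real \<Rightarrow> complex) \<Rightarrow> bool" where
  "Cn 0 a b f = True"
| "Cn (Suc n) a b f = (\<exists>f'. (\<forall>x\<in>{a..b}. (f has_vector_derivative f' x) (at x within {a..b})) \<and> Cn n a b f')"

lemma Cn_cong: "Cn n a b f \<Longrightarrow> (\<And>x. x \<in> {a..b} \<Longrightarrow> f x = g x) \<Longrightarrow> Cn n a b g"
proof (induction n arbitrary: f g)
  case 0 then show ?case by simp
next
  case (Suc n)
  then obtain f' where f': "\<forall>x\<in>{a..b}. (f has_vector_derivative f' x) (at x within {a..b})" "Cn n a b f'" by auto
  have "\<forall>x\<in>{a..b}. (g has_vector_derivative f' x) (at x within {a..b})"
  proof
    fix x assume x: "x \<in> {a..b}"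
    show "(g has_vector_derivative f' x) (at x within {a..b})"
      by (rule has_vector_derivative_transform_within[OF f'(1)[rule_format, OF x], where d=1])
         (use x Suc.prems(2) in auto)
  qed
  with f'(2) show ?case by auto
qed

lemma Cn_mono: "Cn (Suc n) a b f \<Longrightarrow> Cn n a b f"
proof (induction n arbitrary: f)
  case 0 then show ?case by simp
next
  case (Suc n)
  then obtain f' where "\<forall>x\<in>{a..b}. (f has_vector_derivative f' x) (at x within {a..b})" "Cn (Suc n) a b f'"
    by auto
  with Suc.IH show ?case by auto
qed

lemma Cn_deriv:
  assumes ab: "a < b" and C: "Cn (Suc n) a b f"
    and d: "\<And>x. x \<in> {a..b} \<Longrightarrow> (f has_vector_derivative g x) (at x within {a..b})"
  shows "Cn n a b g"
proof -
  obtain f' where f': "\<forall>x\<in>{a..b}. (f has_vector_derivative f' x) (at x within {a..b})" "Cn n a b f'"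
    using C by auto
  show ?thesis
  proof (rule Cn_cong[OF f'(2)])
    fix x assume x: "x \<in> {a..b}"
    show "f' x = g x"
      using vector_derivative_unique_within_closed_interval[of a b x f "f' x" "g x"] ab x f'(1) d[OF x]
      by simp
  qed
qed

lemma Cn_const: "Cn n a b (\<lambda>x. c)"
proof (induction n arbitrary: c)
  case 0 then show ?case by simp
next
  case (Suc n)
  have "\<forall>x\<in>{a..b}. ((\<lambda>x. c) has_vector_derivative (\<lambda>x. 0) x) (at x within {a..b})" by simp
  with Suc.IH[of 0] show ?case by (auto simp del: has_vector_derivative_const)
qed

lemma Cn_add: "Cn n a b f \<Longrightarrow> Cn n a b g \<Longrightarrow> Cn n a b (\<lambda>x. f x + g x)"
proof (induction n arbitrary: f g)
  case 0 then show ?case by simp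
next
  case (Suc n)
  obtain f' where f': "\<forall>x\<in>{a..b}. (f has_vector_derivative f' x) (at x within {a..b})" "Cn n a b f'"
    using Suc.prems(1) by auto
  obtain g' where g': "\<forall>x\<in>{a..b}. (g has_vector_derivative g' x) (at x within {a..b})" "Cn n a b g'"
    using Suc.prems(2) by auto
  have "\<forall>x\<in>{a..b}. ((\<lambda>x. f x + g x) has_vector_derivative (\<lambda>x. f' x + g' x) x) (at x within {a..b})"
    using f'(1) g'(1) by (auto intro: has_vector_derivative_add)
  with Suc.IH[OF f'(2) g'(2)] show ?case by auto
qed

lemma Cn_mult: "Cn n a b f \<Longrightarrow> Cn n a b g \<Longrightarrow> Cn n a b (\<lambda>x. f x * g x)"
proof (induction n arbitrary: f g)
  case 0 then show ?case by simp
next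
  case (Suc n)
  obtain f' where f': "\<forall>x\<in>{a..b}. (f has_vector_derivative f' x) (at x within {a..b})" "Cn n a b f'"
    using Suc.prems(1) by auto
  obtain g' where g': "\<forall>x\<in>{a..b}. (g has_vector_derivative g' x) (at x within {a..b})" "Cn n a b g'"
    using Suc.prems(2) by auto
  have "\<forall>x\<in>{a..b}. ((\<lambda>x. f x * g x) has_vector_derivative (\<lambda>x. f x * g' x + f' x * g x) x) (at x within {a..b})"
    using f'(1) g'(1) by (auto intro: has_vector_derivative_mult)
  moreover have "Cn n a b (\<lambda>x. f x * g' x + f' x * g x)"
  proof -
    have fg: "Cn n a b f" "Cn n a b g" using Cn_mono Suc.prems by blast+
    show ?thesis by (rule Cn_add[OF Suc.IH[OF fg(1) g'(2)] Suc.IH[OF f'(2) fg(2)]])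
  qed
  ultimately show ?case by auto
qed

lemma Cn_all_deriv:
  assumes ab: "a < b" and C: "\<forall>m. Cn m a b f"
  shows "\<exists>f'. (\<forall>x\<in>{a..b}. (f has_vector_derivative f' x) (at x within {a..b})) \<and> (\<forall>m. Cn m a b f')"
proof -
  obtain f' where f': "\<forall>x\<in>{a..b}. (f has_vector_derivative f' x) (at x within {a..b})"
    using C[rule_format, of 1] by auto
  have "\<forall>m. Cn m a b f'"
  proof
    fix m show "Cn m a b f'" by (rule Cn_deriv[OF ab C[rule_format, of "Suc m"]]) (use f' in auto)
  qed
  with f' show ?thesis by blast
qed

lemma Cn_tower:
  assumes ab: "a < b" and C: "\<forall>m. Cn m a b f"
  shows "\<exists>D. smooth_tower a b f D"
proof -
  define der where "der g = (SOME g'. (\<forall>x\<in>{a..b}. (g has_vector_derivative g' x) (at x within {a..b})) \<and> (\<forall>m. Cn m a b g'))" for g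
  define D where "D k = (der ^^ k) f" for k
  have der: "(\<forall>x\<in>{a..b}. (g has_vector_derivative der g x) (at x within {a..b})) \<and> (\<forall>m. Cn m a b (der g))"
    if "\<forall>m. Cn m a b g" for g
    unfolding der_def by (rule someI_ex[OF Cn_all_deriv[OF ab that]])
  have inv: "\<forall>m. Cn m a b (D k)" for k
  proof (induction k)
    case 0 then show ?case using C by (simp add: D_def)
  next
    case (Suc k) then show ?case using der[of "D k"] by (simp add: D_def)
  qed
  have "smooth_tower a b f D"
    unfolding smooth_tower_def
  proof (intro conjI allI ballI)
    fix x assume "x \<in> {a..b}" then show "D 0 x = f x" by (simp add: D_def)
  next
    fix n x assume x: "x \<in> {a..b}"
    show "(D n has_vector_derivative D (Suc n) x) (at x within {a..b})"
      using der[OF inv[of n]] x by (simp add: D_def)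
  qed
  then show ?thesis by blast
qed

lemma tower_Cn:
  assumes "smooth_tower a b f D"
  shows "Cn m a b (D k)"
proof (induction m arbitrary: k)
  case 0 then show ?case by simp
next
  case (Suc m)
  have "\<forall>x\<in>{a..b}. (D k has_vector_derivative D (Suc k) x) (at x within {a..b})"
    using assms unfolding smooth_tower_def by blast
  with Suc.IH[of "Suc k"] show ?case by auto
qed

lemma Cn_comp:
  fixes Y Y' :: "real \<Rightarrow> real" and \<phi> :: "real \<Rightarrow> complex"
  assumes cd: "c < d" and Ymap: "\<And>x. x \<in> {a..b} \<Longrightarrow> Y x \<in> {c..d}"
    and dY: "\<And>x. x \<in> {a..b} \<Longrightarrow> (Y has_real_derivative Y' x) (at x within {a..b})"
    and CY: "\<forall>m. Cn m a b (\<lambda>x. of_real (Y' x))"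
  shows "\<forall>\<phi>. (\<forall>m. Cn m c d \<phi>) \<longrightarrow> Cn n a b (\<lambda>x. \<phi> (Y x))"
proof (induction n)
  case 0 then show ?case by simp
next
  case (Suc n)
  show ?case
  proof (intro allI impI)
    fix \<phi> :: "real \<Rightarrow> complex" assume C: "\<forall>m. Cn m c d \<phi>"
    obtain \<phi>' where \<phi>': "\<forall>y\<in>{c..d}. (\<phi> has_vector_derivative \<phi>' y) (at y within {c..d})" "\<forall>m. Cn m c d \<phi>'"
      using Cn_all_deriv[OF cd C] by blast
    have "\<forall>x\<in>{a..b}. ((\<lambda>x. \<phi> (Y x)) has_vector_derivative (\<lambda>x. of_real (Y' x) * \<phi>' (Y x)) x) (at x within {a..b})"
    proof
      fix x assume x: "x \<in> {a..b}"
      have d1: "(Y has_vector_derivative Y' x) (at x within {a..b})"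
        using dY[OF x] by (simp add: has_real_derivative_iff_has_vector_derivative)
      have d2: "(\<phi> has_vector_derivative \<phi>' (Y x)) (at (Y x) within Y ` {a..b})"
        by (rule has_vector_derivative_within_subset[OF \<phi>'(1)[rule_format, OF Ymap[OF x]]]) (use Ymap in auto)
      from vector_diff_chain_within[OF d1 d2]
      show "((\<lambda>x. \<phi> (Y x)) has_vector_derivative (\<lambda>x. of_real (Y' x) * \<phi>' (Y x)) x) (at x within {a..b})"
        by (simp add: o_def scaleR_conv_of_real)
    qed
    moreover have "Cn n a b (\<lambda>x. of_real (Y' x) * \<phi>' (Y x))"
      by (rule Cn_mult[OF CY[rule_format]]) (use Suc.IH \<phi>'(2) in blast)
    ultimately show "Cn (Suc n) a b (\<lambda>x. \<phi> (Y x))" by auto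
  qed
qed




lemma powr_lin_deriv:
  fixes w :: complex and s x :: real
  assumes "s + 1 - 2*x > 0"
  shows "((\<lambda>x. of_real (s+1-2*x) powr w) has_vector_derivative (-2 * (w * of_real (s+1-2*x) powr (w-1)))) (at x within S)"
proof -
  have nz: "of_real (s+1-2*x) \<notin> \<real>\<^sub>\<le>\<^sub>0" using assms by (simp only: nonpos_Reals_of_real_iff)
  have d1: "((\<lambda>z. z powr w) has_field_derivative (w * of_real (s+1-2*x) powr (w - 1))) (at ((\<lambda>z. of_real s + 1 - 2*z) (of_real x)))"
    using has_field_derivative_powr[OF nz] by simp
  have d2: "((\<lambda>z::complex. of_real s + 1 - 2*z) has_field_derivative -2) (at (of_real x))"
    by (auto intro!: derivative_eq_intros)
  have "((\<lambda>z. (of_real s + 1 - 2*z) powr w) has_field_derivative (w * of_real (s+1-2*x) powr (w - 1)) * (-2)) (at (of_real x))"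
    using DERIV_chain2[OF d1 d2] by simp
  from has_vector_derivative_real_field[OF this, where s=S] show ?thesis by (simp add: mult.commute)
qed

lemma Cn_powr_lin:
  fixes s :: real
  assumes "s > 1"
  shows "Cn m 0 1 (\<lambda>x. of_real (s+1-2*x) powr w)"
proof (induction m arbitrary: w)
  case 0 then show ?case by simp
next
  case (Suc m)
  have "\<forall>x\<in>{0..1}. ((\<lambda>x. of_real (s+1-2*x) powr w) has_vector_derivative (\<lambda>x. (-2 * w) * of_real (s+1-2*x) powr (w-1)) x) (at x within {0..1})"
  proof
    fix x :: real assume "x \<in> {0..1}"
    then have "s + 1 - 2*x > 0" using assms by auto
    from powr_lin_deriv[OF this, of w "{0..1}"]
    show "((\<lambda>x. of_real (s+1-2*x) powr w) has_vector_derivative (\<lambda>x. (-2 * w) * of_real (s+1-2*x) powr (w-1)) x) (at x within {0..1})"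
      by (simp add: mult.assoc)
  qed
  moreover have "Cn m 0 1 (\<lambda>x. (-2 * w) * of_real (s+1-2*x) powr (w-1))"
    by (rule Cn_mult[OF Cn_const Suc.IH])
  ultimately show ?case by auto
qed




lemma part2:
  fixes a :: real and l :: complex and \<phi> :: "real \<Rightarrow> complex" and Dp :: "nat \<Rightarrow> real \<Rightarrow> complex"
  assumes a0: "a > 0" and Rl: "Re l > -1" and l0: "l \<noteq> 0" and l1: "l \<noteq> 1"
    and tow: "smooth_tower (-1) 1 \<phi> Dp"
    and eq: "\<forall>y\<in>{-1..1}. (l\<^sup>2 + l) * Dp 0 y
                + ((2 * l + 2) * of_real y + of_real (2 * a / (sqrt (1 + a) + y))) * Dp 1 y
                + of_real (y\<^sup>2 - 1) * Dp 2 y = 0"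
  shows "\<forall>y\<in>{-1..1}. \<phi> y = 0"
proof -
  define s where "s = sqrt (1 + a)"
  have s1: "s > 1" unfolding s_def using a0 by simp
  have ss: "a = s^2 - 1" unfolding s_def using a0 by simp
  define t where "t x = s + 1 - 2*x" for x :: real
  define Y where "Y x = a / t x - s" for x
  define Y1 where "Y1 x = 2*a / (t x)^2" for x
  define Y2 where "Y2 x = 8*a / (t x)^3" for x
  define T where "T w x = of_real (t x) powr w" for w :: complex and x
  have tpos: "t x > 0" if "x \<in> {0..1}" for x using that s1 unfolding t_def by auto
  have Ymap: "Y x \<in> {-1..1}" if x: "x \<in> {0..1}" for x
  proof -
    have t1: "t x \<ge> s - 1" "t x \<le> s + 1" using x unfolding t_def by auto
    have "a / t x \<le> a / (s - 1)" using t1 s1 a0 by (intro divide_left_mono) auto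
    also have "a / (s - 1) = s + 1" using s1 unfolding ss by (simp add: field_simps power2_eq_square)
    finally have u: "Y x \<le> 1" unfolding Y_def by simp
    have "a / (s + 1) \<le> a / t x" using t1 s1 a0 tpos[OF x] by (intro divide_left_mono) auto
    moreover have "a / (s + 1) = s - 1" using s1 unfolding ss by (simp add: field_simps power2_eq_square)
    ultimately have "Y x \<ge> -1" unfolding Y_def by simp
    with u show ?thesis by simp
  qed
  have dT: "(T w has_vector_derivative (-2 * (w * T (w-1) x))) (at x within {0..1})" if x: "x \<in> {0..1}" for w x
    using powr_lin_deriv[of s x w "{0..1}"] tpos[OF x] unfolding T_def t_def by simp
  have dY: "(Y has_real_derivative Y1 x) (at x within {0..1})" if x: "x \<in> {0..1}" for x
  proof -
    have tn: "s + 1 - 2*x \<noteq> 0" using tpos[OF x] unfolding t_def by simp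
    have "((\<lambda>x. a / (s + 1 - 2*x) - s) has_real_derivative (2*a / (s + 1 - 2*x)^2)) (at x within {0..1})"
      using tn by (auto intro!: derivative_eq_intros simp: field_simps power2_eq_square)
    then show ?thesis unfolding Y_def Y1_def t_def .
  qed
  have dY1: "((\<lambda>x. of_real (Y1 x) :: complex) has_vector_derivative of_real (Y2 x)) (at x within {0..1})"
    if x: "x \<in> {0..1}" for x
  proof -
    have tn: "s + 1 - 2*x \<noteq> 0" using tpos[OF x] unfolding t_def by simp
    have p: "((\<lambda>x. (s + 1 - 2*x)^2) has_real_derivative (2*(s+1-2*x)*(-2))) (at x within {0..1})"
      by (auto intro!: derivative_eq_intros)
    have q: "((\<lambda>x. 2*a * inverse ((s + 1 - 2*x)^2)) has_real_derivative (2*a * (- ((2*(s+1-2*x)*(-2)) * inverse(((s + 1 - 2*x)^2) ^ Suc (Suc 0)))))) (at x within {0..1})"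
      by (intro DERIV_cmult DERIV_inverse_fun[OF p]) (use tn in simp)
    define v where "v = s + 1 - 2*x"
    have vn: "v \<noteq> 0" using tn unfolding v_def .
    have "2*a * (- ((2 * v * (- 2)) * inverse((v^2) ^ Suc (Suc 0)))) = 8*a / v^3"
      using vn by (simp add: field_simps power2_eq_square power3_eq_cube)
    with q have "((\<lambda>x. 2*a * inverse ((s + 1 - 2*x)^2)) has_real_derivative (8*a / (s + 1 - 2*x)^3)) (at x within {0..1})"
      unfolding v_def by simp
    then have "((\<lambda>x. 2*a / (s + 1 - 2*x)^2) has_real_derivative (8*a / (s + 1 - 2*x)^3)) (at x within {0..1})"
      by (simp add: divide_inverse)
    then show ?thesis unfolding Y1_def Y2_def t_def by (rule has_vector_derivative_of_real)
  qed
  have dtow: "\<And>n y. y \<in> {-1..1} \<Longrightarrow> (Dp n has_vector_derivative Dp (Suc n) y) (at y within {-1..1})"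
    using tow unfolding smooth_tower_def by blast
  have dDp: "((\<lambda>x. Dp k (Y x)) has_vector_derivative of_real (Y1 x) * Dp (Suc k) (Y x)) (at x within {0..1})"
    if x: "x \<in> {0..1}" for k x
  proof -
    have d1: "(Y has_vector_derivative Y1 x) (at x within {0..1})"
      using dY[OF x] by (simp add: has_real_derivative_iff_has_vector_derivative)
    have d2: "(Dp k has_vector_derivative Dp (Suc k) (Y x)) (at (Y x) within Y ` {0..1})"
      by (rule has_vector_derivative_within_subset[OF dtow[OF Ymap[OF x]]]) (use Ymap in auto)
    from vector_diff_chain_within[OF d1 d2] show ?thesis
      by (simp add: o_def scaleR_conv_of_real)
  qed
  define \<psi> where "\<psi> x = T (-l) x * Dp 0 (Y x)" for x
  define \<psi>1 where "\<psi>1 x = 2*l*T (-l-1) x*Dp 0 (Y x) + T (-l) x* of_real (Y1 x)*Dp 1 (Y x)" for x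
  define \<psi>2 where "\<psi>2 x = 2*l*(2*(l+1)*T (-l-2) x*Dp 0 (Y x) + T (-l-1) x* of_real (Y1 x)*Dp 1 (Y x))
     + (2*l*T (-l-1) x* of_real (Y1 x)*Dp 1 (Y x) + T (-l) x*(of_real (Y2 x)*Dp 1 (Y x) + of_real (Y1 x)^2*Dp 2 (Y x)))" for x
  have d\<psi>: "(\<psi> has_vector_derivative \<psi>1 x) (at x within {0..1})" if x: "x \<in> {0..1}" for x
  proof -
    have "(\<psi> has_vector_derivative (T (-l) x * (of_real (Y1 x) * Dp (Suc 0) (Y x)) + (-2 * ((-l) * T (-l-1) x)) * Dp 0 (Y x))) (at x within {0..1})"
      unfolding \<psi>_def by (rule has_vector_derivative_mult[OF dT[OF x] dDp[OF x]])
    then show ?thesis by (rule has_vector_derivative_eq_rhs) (simp add: \<psi>1_def algebra_simps)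
  qed
  have d\<psi>1: "(\<psi>1 has_vector_derivative \<psi>2 x) (at x within {0..1})" if x: "x \<in> {0..1}" for x
  proof -
    have e: "-l-1-1 = -l-2" by simp
    have A: "((\<lambda>x. 2*l*T (-l-1) x*Dp 0 (Y x)) has_vector_derivative
       2*l*(T (-l-1) x * (of_real (Y1 x) * Dp (Suc 0) (Y x)) + (-2 * ((-l-1) * T (-l-1-1) x)) * Dp 0 (Y x))) (at x within {0..1})"
    proof -
      have A0: "((\<lambda>x. T (-l-1) x * Dp 0 (Y x)) has_vector_derivative (T (-l-1) x * (of_real (Y1 x) * Dp (Suc 0) (Y x)) + (-2 * ((-l-1) * T (-l-1-1) x)) * Dp 0 (Y x))) (at x within {0..1})"
        by (rule has_vector_derivative_mult[OF dT[OF x] dDp[OF x]])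
      show ?thesis using has_vector_derivative_mult_right[OF A0, of "2*l"] by (simp only: mult.assoc)
    qed
    have B: "((\<lambda>x. T (-l) x* of_real (Y1 x)*Dp 1 (Y x)) has_vector_derivative
       (T (-l) x* of_real (Y1 x)) * (of_real (Y1 x) * Dp (Suc 1) (Y x)) + (T (-l) x * of_real (Y2 x) + (-2 * ((-l) * T (-l-1) x)) * of_real (Y1 x)) * Dp 1 (Y x)) (at x within {0..1})"
      by (intro has_vector_derivative_mult dT[OF x] dDp[OF x] dY1[OF x])
    have "(\<psi>1 has_vector_derivative (2*l*(T (-l-1) x * (of_real (Y1 x) * Dp (Suc 0) (Y x)) + (-2 * ((-l-1) * T (-l-1-1) x)) * Dp 0 (Y x)))
        + ((T (-l) x* of_real (Y1 x)) * (of_real (Y1 x) * Dp (Suc 1) (Y x)) + (T (-l) x * of_real (Y2 x) + (-2 * ((-l) * T (-l-1) x)) * of_real (Y1 x)) * Dp 1 (Y x))) (at x within {0..1})"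
      unfolding \<psi>1_def by (rule has_vector_derivative_add[OF A B])
    then show ?thesis unfolding e by (rule has_vector_derivative_eq_rhs) (simp add: \<psi>2_def algebra_simps power2_eq_square numeral_2_eq_2)
  qed
  have CT: "Cn m 0 1 (T w)" for m w
    using Cn_powr_lin[OF s1, of m w] unfolding T_def t_def .
  have CY1: "\<forall>m. Cn m 0 1 (\<lambda>x. of_real (Y1 x))"
  proof
    fix m
    show "Cn m 0 1 (\<lambda>x. of_real (Y1 x))"
    proof (rule Cn_cong[OF Cn_mult[OF Cn_const CT]])
      fix x :: real assume x: "x \<in> {0..1}"
      have tn: "t x \<noteq> 0" using tpos[OF x] by simp
      have "T (-2) x = inverse (of_real (t x) ^ 2)"
        unfolding T_def by (simp add: powr_minus)
      then show "of_real (2*a) * T (-2) x = of_real (Y1 x)"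
        unfolding Y1_def using tn by (simp add: field_simps)
    qed
  qed
  have CDp: "\<forall>m. Cn m (-1) 1 (Dp 0)" using tower_Cn[OF tow] by blast
  have Cpsi: "\<forall>m. Cn m 0 1 \<psi>"
  proof
    fix m
    have "Cn m 0 1 (\<lambda>x. Dp 0 (Y x))"
      using Cn_comp[of "-1" 1 0 1 Y Y1, OF _ Ymap dY CY1] CDp by auto
    then show "Cn m 0 1 \<psi>" unfolding \<psi>_def by (rule Cn_mult[OF CT])
  qed
  obtain D' where tw: "smooth_tower 0 1 \<psi> D'" using Cn_tower[of 0 1 \<psi>] Cpsi by auto
  have tD: "\<And>n x. x \<in> {0..1} \<Longrightarrow> (D' n has_vector_derivative D' (Suc n) x) (at x within {0..1})"
    using tw unfolding smooth_tower_def by blast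
  have D0: "\<And>x. x \<in> {0..1} \<Longrightarrow> D' 0 x = \<psi> x" using tw unfolding smooth_tower_def by blast
  have D1: "D' 1 x = \<psi>1 x" if x: "x \<in> {0..1}" for x
  proof -
    have "(\<psi> has_vector_derivative D' 1 x) (at x within {0..1})"
    proof -
      have h: "(D' 0 has_vector_derivative D' 1 x) (at x within {0..1})" using tD[OF x, of 0] by simp
      show ?thesis by (rule has_vector_derivative_transform_within[OF h, where d=1]) (use x D0 in auto)
    qed
    then show ?thesis
      using vector_derivative_unique_within_closed_interval[of 0 1 x \<psi> "D' 1 x" "\<psi>1 x"] x d\<psi>[OF x] by simp
  qed
  have D2: "D' 2 x = \<psi>2 x" if x: "x \<in> {0..1}" for x
  proof -
    have "(\<psi>1 has_vector_derivative D' 2 x) (at x within {0..1})"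
    proof -
      have h: "(D' 1 has_vector_derivative D' 2 x) (at x within {0..1})" using tD[OF x, of 1] by (simp add: numeral_2_eq_2)
      show ?thesis by (rule has_vector_derivative_transform_within[OF h, where d=1]) (use x D1 in auto)
    qed
    then show ?thesis
      using vector_derivative_unique_within_closed_interval[of 0 1 x \<psi>1 "D' 2 x" "\<psi>2 x"] x d\<psi>1[OF x] by simp
  qed
  have eq\<psi>: "\<forall>z\<in>{0..1}. of_real (z * (1 - z)) * D' 2 z + ((l - of_real s) - 2 * l * of_real z) * D' 1 z - l * (l - 1) * D' 0 z = 0"
  proof
    fix x :: real assume x: "x \<in> {0..1}"
    define S where "S = (of_real s :: complex)"
    define Tt where "Tt = (of_real (t x) :: complex)"
    define P where "P = T (-l) x"
    have Tn: "Tt \<noteq> 0" using tpos[OF x] unfolding Tt_def by simp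
    have An: "S^2 - 1 \<noteq> 0"
    proof -
      have "S^2 - 1 = of_real a" unfolding S_def ss by simp
      then show ?thesis using a0 by simp
    qed
    note TI = transf_identity[OF Tn An, of l P "Dp 0 (Y x)" "Dp 1 (Y x)" "Dp 2 (Y x)"]
    have Sa: "S^2 - 1 = of_real a" unfolding S_def ss by simp
    have eX: "(S+1-Tt)/2 = of_real x" unfolding S_def Tt_def t_def by simp
    have eY1: "2*(S^2-1)/Tt^2 = of_real (Y1 x)" unfolding Sa Tt_def Y1_def by simp
    have eY2: "8*(S^2-1)/Tt^3 = of_real (Y2 x)" unfolding Sa Tt_def Y2_def by simp
    have eP1: "P/Tt = T (-l-1) x"
    proof -
      have "T (-l-1) x = T (-l) x / of_real (t x) powr 1" unfolding T_def by (simp only: powr_diff)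
      then show ?thesis unfolding P_def Tt_def by simp
    qed
    have eP2: "P/Tt^2 = T (-l-2) x"
    proof -
      have "T (-l-2) x = T (-l) x / of_real (t x) powr 2" unfolding T_def by (simp only: powr_diff)
      then show ?thesis unfolding P_def Tt_def by simp
    qed
    have eYY: "(S^2-1)/Tt - S = of_real (Y x)" unfolding Sa unfolding Tt_def Y_def S_def by simp
    have eR: "2*(S^2-1)/(S + of_real (Y x)) = of_real (2 * a / (sqrt (1 + a) + Y x))"
      unfolding Sa unfolding S_def s_def by simp
    have eQ: "of_real (Y x)^2 - 1 = (of_real ((Y x)^2 - 1) :: complex)" by simp
    have br: "(l\<^sup>2 + l) * Dp 0 (Y x) + ((2 * l + 2) * of_real (Y x) + of_real (2 * a / (sqrt (1 + a) + Y x))) * Dp 1 (Y x)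
                + of_real ((Y x)\<^sup>2 - 1) * Dp 2 (Y x) = 0"
      using eq Ymap[OF x] by blast
    from TI have TI': "(of_real x * (1 - of_real x)) * \<psi>2 x + ((l - S) - 2*l* of_real x) * \<psi>1 x - l*(l-1)*(\<psi> x)
       = - ((S^2-1)/Tt^2) * P * ((l^2+l)*Dp 0 (Y x) + ((2*l+2)* of_real (Y x) + of_real (2 * a / (sqrt (1 + a) + Y x)))*Dp 1 (Y x)
          + of_real ((Y x)\<^sup>2 - 1)*Dp 2 (Y x))"
      unfolding eP2 eP1 eY1 eY2 eX eYY unfolding eR eQ
      by (simp only: \<psi>_def \<psi>1_def \<psi>2_def P_def)
    show "of_real (x * (1 - x)) * D' 2 x + ((l - of_real s) - 2 * l * of_real x) * D' 1 x - l * (l - 1) * D' 0 x = 0"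
      using TI' br unfolding D0[OF x] D1[OF x] D2[OF x] S_def by simp
  qed
  have psi0: "\<forall>z\<in>{0..1}. \<psi> z = 0" by (rule part1[OF s1 Rl l0 l1 tw eq\<psi>])
  show ?thesis
  proof
    fix y :: real assume y: "y \<in> {-1..1}"
    define x where "x = (s + 1 - a / (y + s)) / 2"
    have ys: "y + s \<ge> s - 1" "y + s \<le> s + 1" using y by auto
    have ysp: "y + s > 0" using ys s1 by simp
    have "a / (y + s) \<le> a / (s - 1)" using ys s1 a0 by (intro divide_left_mono) auto
    also have "a / (s - 1) = s + 1" using s1 unfolding ss by (simp add: field_simps power2_eq_square)
    finally have u1: "a / (y + s) \<le> s + 1" .
    have "a / (s + 1) \<le> a / (y + s)" using ys s1 a0 ysp by (intro divide_left_mono) auto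
    moreover have "a / (s + 1) = s - 1" using s1 unfolding ss by (simp add: field_simps power2_eq_square)
    ultimately have u2: "a / (y + s) \<ge> s - 1" by simp
    have x01: "x \<in> {0..1}" unfolding x_def using u1 u2 by auto
    have tx: "t x = a / (y + s)" unfolding t_def x_def using ysp by (simp add: field_simps)
    have Yx: "Y x = y" unfolding Y_def tx using ysp a0 by simp
    have "\<psi> x = 0" using psi0 x01 by blast
    moreover have "T (-l) x \<noteq> 0" unfolding T_def using tpos[OF x01] by (simp add: powr_def)
    ultimately have "Dp 0 y = 0" unfolding \<psi>_def Yx by simp
    moreover have "Dp 0 y = \<phi> y" using tow y unfolding smooth_tower_def by blast
    ultimately show "\<phi> y = 0" by simp
  qed
qed


theorem mainTheorem5:
  fixes a :: real and l :: complex
  assumes "a > 0" and "Re l > -1" and "l \<noteq> 0" and "l \<noteq> 1"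
  shows "(\<forall>\<psi> D. smooth_tower 0 1 \<psi> D \<and>
            (\<forall>z\<in>{0..1}. of_real (z * (1 - z)) * D 2 z
                + ((l - of_real (sqrt (1 + a))) - 2 * l * of_real z) * D 1 z
                - l * (l - 1) * D 0 z = 0)
          \<longrightarrow> (\<forall>z\<in>{0..1}. \<psi> z = 0))
       \<and> (\<forall>\<phi> D. smooth_tower (-1) 1 \<phi> D \<and>
            (\<forall>y\<in>{-1..1}. (l\<^sup>2 + l) * D 0 y
                + ((2 * l + 2) * of_real y + of_real (2 * a / (sqrt (1 + a) + y))) * D 1 y
                + of_real (y\<^sup>2 - 1) * D 2 y = 0)
          \<longrightarrow> (\<forall>y\<in>{-1..1}. \<phi> y = 0))"
proof (intro conjI allI impI)
  have s1: "sqrt (1 + a) > 1" using assms(1) by simp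
  fix \<psi> D
  assume h: "smooth_tower 0 1 \<psi> D \<and>
            (\<forall>z\<in>{0..1}. of_real (z * (1 - z)) * D 2 z
                + ((l - of_real (sqrt (1 + a))) - 2 * l * of_real z) * D 1 z
                - l * (l - 1) * D 0 z = 0)"
  show "\<forall>z\<in>{0..1}. \<psi> z = 0"
    using part1[OF s1 assms(2,3,4), of \<psi> D] h by blast
next
  fix \<phi> D
  assume h: "smooth_tower (-1) 1 \<phi> D \<and>
            (\<forall>y\<in>{-1..1}. (l\<^sup>2 + l) * D 0 y
                + ((2 * l + 2) * of_real y + of_real (2 * a / (sqrt (1 + a) + y))) * D 1 y
                + of_real (y\<^sup>2 - 1) * D 2 y = 0)"
  show "\<forall>y\<in>{-1..1}. \<phi> y = 0"
    using part2[OF assms(1,2,3,4), of \<phi> D] h by blast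
qed

end
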